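(* Let $c_1=\frac12(\log(2\pi)-1)$, $c_2=1+\gamma$ and $c_n=\zeta(n-1)$ for $n\ge3$. Then for all complex $x$ with $|x|<1$, $$\frac1{G(1+x)}=\sum_{n=0}^\infty Y_n\!\left(-c_1,\,1!\,c_2,\dots,(-1)^n(n-1)!\,c_n\right)\frac{x^n}{n!}$$ (the $j$-th argument being $(-1)^j(j-1)!\,c_j$), and for every integer $m\ge0$, $$\left.\frac{d^m}{dx^m}\frac1{G(1+x)}\right|_{x=0}=(-1)^mY_m\!\left(c_1,1!\,c_2,\dots,(m-1)!\,c_m\right),$$ which is nonzero with the sign of $(-1)^m$. In particular $G'(1)=\frac12(\log(2\pi)-1)$.
   Context: $G$ is the Barnes double gamma function, $G(1+x)=(2\pi)^{x/2}\exp\!\left[-\tfrac12\big((1+\gamma)x^2+x\big)\right]\prod_{k=1}^\infty\left(1+\frac xk\right)^k\exp\!\left(\frac{x^2}{2k}-x\right)$. $\gamma$ is Euler's constant, $\zeta$ the Riemann zeta function. Complete (exponential) Bell polynomials: $Y_0=1$ and for $r\ge1$, $Y_r(x_1,\dots,x_r)=\sum \frac{r!}{k_1!\cdots k_r!}\prod_{j=1}^r\left(\frac{x_j}{j!}\right)^{k_j}$, the sum over all tuples of nonnegative integers $(k_1,\dots,k_r)$ with $k_1+2k_2+\cdots+rk_r=r$. *)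

theory Defs
  imports "HOL-Analysis.Analysis"
begin

text \<open>Barnes G-function on the complex plane, via the Weierstrass product
  G(1+x) = (2 pi)^(x/2) exp(-((1+gamma) x^2 + x)/2) prod_{k>=1} (1+x/k)^k exp(x^2/(2k) - x),
  with x = z - 1.\<close>
definition barnesG :: "complex \<Rightarrow> complex" where
  "barnesG z = (let x = z - 1 in
     exp (x / 2 * of_real (ln (2 * pi)))
     * exp (- ((1 + euler_mascheroni) * x\<^sup>2 + x) / 2)
     * (\<Prod>k. (1 + x / of_nat (Suc k)) ^ (Suc k) * exp (x\<^sup>2 / (2 * of_nat (Suc k)) - x)))"

definition zeta_nat :: "nat \<Rightarrow> real" where
  "zeta_nat n = (\<Sum>k. 1 / real (Suc k) ^ n)"

text \<open>Complete exponential Bell polynomial Y_r(x_1,...,x_r); the sum runs over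
  tuples (k_1,...,k_r) of naturals (encoded as functions vanishing outside {1..r})
  with k_1 + 2 k_2 + ... + r k_r = r.\<close>
definition bell_Y :: "nat \<Rightarrow> (nat \<Rightarrow> 'a::field_char_0) \<Rightarrow> 'a" where
  "bell_Y r x = (\<Sum>k \<in> {k :: nat \<Rightarrow> nat. (\<forall>j. j \<notin> {1..r} \<longrightarrow> k j = 0)
                                  \<and> (\<Sum>j=1..r. j * k j) = r}.
      fact r / (\<Prod>j=1..r. fact (k j)) * (\<Prod>j=1..r. (x j / fact j) ^ (k j)))"

definition cB :: "nat \<Rightarrow> real" where
  "cB n = (if n = 1 then (ln (2 * pi) - 1) / 2
           else if n = 2 then 1 + euler_mascheroni
           else zeta_nat (n - 1))"

end

theory Submission
  imports Defs
begin


definition Kset :: "nat \<Rightarrow> nat \<Rightarrow> (nat \<Rightarrow> nat) set" where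
  "Kset N n = {k. (\<forall>j. j \<notin> {1..N} \<longrightarrow> k j = 0) \<and> (\<Sum>j=1..N. j * k j) = n}"

definition Ssum :: "(nat \<Rightarrow> 'a::field_char_0) \<Rightarrow> nat \<Rightarrow> nat \<Rightarrow> 'a" where
  "Ssum a N n = (\<Sum>k\<in>Kset N n. \<Prod>j=1..N. a j ^ k j / fact (k j))"

lemma finite_Kset: "finite (Kset N n)"
proof -
  let ?g = "\<lambda>f j. if j \<in> {1..N} then f j else (0::nat)"
  have "Kset N n \<subseteq> ?g ` (PiE {1..N} (\<lambda>_. {0..n}))"
  proof
    fix k assume k: "k \<in> Kset N n"
    have "k = ?g (restrict k {1..N})" using k by (auto simp: Kset_def fun_eq_iff)
    moreover have "restrict k {1..N} \<in> PiE {1..N} (\<lambda>_. {0..n})"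
    proof -
      have "k j \<le> n" if "j \<in> {1..N}" for j
      proof -
        have "k j \<le> j * k j" using that by auto
        also have "\<dots> \<le> (\<Sum>j=1..N. j * k j)" by (rule member_le_sum) (use that in auto)
        finally show ?thesis using k by (simp add: Kset_def)
      qed
      thus ?thesis by auto
    qed
    ultimately show "k \<in> ?g ` (PiE {1..N} (\<lambda>_. {0..n}))" by blast
  qed
  thus ?thesis by (rule finite_subset) (intro finite_imageI finite_PiE, auto)
qed

lemma Kset_mono: "N \<le> M \<Longrightarrow> Kset N n \<subseteq> Kset M n"
proof
  assume NM: "N \<le> M"
  fix k assume k: "k \<in> Kset N n"
  have "(\<Sum>j=1..M. j * k j) = (\<Sum>j=1..N. j * k j)"
    using k NM by (intro sum.mono_neutral_right) (auto simp: Kset_def)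
  thus "k \<in> Kset M n" using k NM by (auto simp: Kset_def)
qed

lemma Kset_prod_eq:
  assumes "N \<le> M" "k \<in> Kset N n"
  shows "(\<Prod>j=1..M. a j ^ k j / fact (k j)) = (\<Prod>j=1..N. (a j ^ k j / fact (k j) :: 'a::field_char_0))"
  using assms by (intro prod.mono_neutral_right) (auto simp: Kset_def)

lemma Kset_eq: 
  assumes "n \<le> N" shows "Kset N n = Kset n n"
proof
  show "Kset n n \<subseteq> Kset N n" using assms by (rule Kset_mono)
  show "Kset N n \<subseteq> Kset n n"
  proof
    fix k assume k: "k \<in> Kset N n"
    have z: "k j = 0" if "j > n" for j
    proof (rule ccontr)
      assume "k j \<noteq> 0"
      hence "j \<in> {1..N}" using k that by (auto simp: Kset_def)
      hence "j * k j \<le> (\<Sum>j=1..N. j * k j)" by (intro member_le_sum) auto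
      hence "j * k j \<le> n" using k by (simp add: Kset_def)
      moreover have "j \<le> j * k j" using \<open>k j \<noteq> 0\<close> by simp
      ultimately show False using that by simp
    qed
    have "(\<Sum>j=1..N. j * k j) = (\<Sum>j=1..n. j * k j)"
      using assms z by (intro sum.mono_neutral_right) auto
    thus "k \<in> Kset n n" using k z by (auto simp: Kset_def)
  qed
qed

lemma Ssum_eq: "n \<le> N \<Longrightarrow> Ssum a N n = Ssum a n n"
  unfolding Ssum_def Kset_eq[of n N] using Kset_prod_eq[of n N]
  by (intro sum.cong) auto

lemma Ssum_mono:
  fixes a :: "nat \<Rightarrow> real"
  assumes "\<And>j. a j \<ge> 0" "N \<le> M"
  shows "Ssum a N n \<le> Ssum a M n"
proof -
  have "Ssum a N n = (\<Sum>k\<in>Kset N n. \<Prod>j=1..M. a j ^ k j / fact (k j))"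
    unfolding Ssum_def by (intro sum.cong refl) (metis Kset_prod_eq[OF assms(2)])
  also have "\<dots> \<le> Ssum a M n" unfolding Ssum_def
    using assms by (intro sum_mono2 finite_Kset Kset_mono prod_nonneg) auto
  finally show ?thesis .
qed

lemma Ssum_le_diag:
  fixes a :: "nat \<Rightarrow> real"
  assumes "\<And>j. a j \<ge> 0"
  shows "Ssum a N n \<le> Ssum a n n"
proof (cases "n \<le> N")
  case True thus ?thesis by (subst Ssum_eq[OF True]) simp
next
  case False thus ?thesis using Ssum_mono[OF assms, of N n] by simp
qed

lemma norm_Ssum:
  fixes a :: "nat \<Rightarrow> 'a::{real_normed_field}"
  shows "norm (Ssum a N n) \<le> Ssum (\<lambda>j. norm (a j)) N n"
  unfolding Ssum_def
  by (rule order.trans[OF norm_sum]) (simp add: prod_norm[symmetric] norm_divide norm_power)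

lemma Ssum_cong: "(\<And>j. j \<in> {1..N} \<Longrightarrow> a j = b j) \<Longrightarrow> Ssum a N n = Ssum b N n"
  unfolding Ssum_def by (intro sum.cong prod.cong) auto

definition Efps :: "'a::field_char_0 \<Rightarrow> nat \<Rightarrow> 'a fps" where
  "Efps c j = Abs_fps (\<lambda>n. if j dvd n then c ^ (n div j) / fact (n div j) else 0)"

lemma Kset_0: "Kset 0 n = (if n = 0 then {\<lambda>_. 0} else {})"
  by (auto simp: Kset_def fun_eq_iff)

lemma prodSuc_split:
  "(\<Prod>j=1..Suc N. f j) = (\<Prod>j=1..N. f j) * (f (Suc N) :: 'a::comm_monoid_mult)"
  by (simp add: atLeastAtMostSuc_conv mult.commute)

lemma Ssum_Suc:
  fixes a :: "nat \<Rightarrow> 'a::field_char_0"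
  shows "Ssum a (Suc N) n = (\<Sum>i=0..n. Ssum a N i * fps_nth (Efps (a (Suc N)) (Suc N)) (n - i))"
proof -
  define T where "T = (\<lambda>k. \<Prod>j=1..N. a j ^ k j / fact (k j))"
  define c where "c = a (Suc N)"
  define S where "S = {p \<in> Sigma {0..n} (\<lambda>i. Kset N i). Suc N dvd (n - fst p)}"
  have "(\<Sum>i=0..n. Ssum a N i * fps_nth (Efps (a (Suc N)) (Suc N)) (n - i))
      = (\<Sum>i=0..n. \<Sum>k\<in>Kset N i. T k * (if Suc N dvd (n - i) then c ^ ((n-i) div Suc N) / fact ((n-i) div Suc N) else 0))"
    unfolding c_def T_def by (simp add: Ssum_def Efps_def sum_distrib_right)
  also have "\<dots> = (\<Sum>p\<in>Sigma {0..n} (\<lambda>i. Kset N i). if Suc N dvd (n - fst p) then T (snd p) * (c ^ ((n - fst p) div Suc N) / fact ((n - fst p) div Suc N)) else 0)"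
    by (subst sum.Sigma) (auto simp: finite_Kset intro!: sum.cong)
  also have "\<dots> = (\<Sum>p\<in>S. T (snd p) * (c ^ ((n - fst p) div Suc N) / fact ((n - fst p) div Suc N)))"
    unfolding S_def by (subst sum.inter_filter) (auto simp: finite_Kset)
  also have "\<dots> = Ssum a (Suc N) n"
    unfolding Ssum_def
  proof (rule sum.reindex_bij_witness[of _ "\<lambda>k. (n - Suc N * k (Suc N), k(Suc N := 0))" "\<lambda>p. (snd p)(Suc N := (n - fst p) div Suc N)"])
    fix p assume p: "p \<in> S"
    obtain i k where [simp]: "p = (i, k)" by (cases p)
    from p have i: "i \<le> n" and k: "k \<in> Kset N i" and d: "Suc N dvd (n - i)" by (auto simp: S_def)
    have kS: "k (Suc N) = 0" using k by (auto simp: Kset_def)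
    have md: "Suc N * ((n - i) div Suc N) = n - i" using d by (rule dvd_mult_div_cancel)
    show "(n - Suc N * ((snd p)(Suc N := (n - fst p) div Suc N)) (Suc N), ((snd p)(Suc N := (n - fst p) div Suc N))(Suc N := 0)) = p"
      using md i kS by (auto simp: fun_eq_iff)
    have "(\<Sum>j=1..Suc N. j * (k(Suc N := (n - i) div Suc N)) j) = (\<Sum>j=1..N. j * k j) + Suc N * ((n - i) div Suc N)"
      by (simp add: atLeastAtMostSuc_conv)
    also have "\<dots> = n" using k md i by (simp add: Kset_def)
    finally show "(snd p)(Suc N := (n - fst p) div Suc N) \<in> Kset (Suc N) n"
      using k by (auto simp: Kset_def)
    have "(\<Prod>j=1..Suc N. a j ^ (k(Suc N := (n - i) div Suc N)) j / fact ((k(Suc N := (n - i) div Suc N)) j))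
        = (\<Prod>j=1..N. a j ^ (k(Suc N := (n - i) div Suc N)) j / fact ((k(Suc N := (n - i) div Suc N)) j)) * (c ^ ((n - i) div Suc N) / fact ((n - i) div Suc N))"
      by (subst prodSuc_split) (simp add: c_def)
    also have "(\<Prod>j=1..N. a j ^ (k(Suc N := (n - i) div Suc N)) j / fact ((k(Suc N := (n - i) div Suc N)) j)) = T k"
      unfolding T_def by (intro prod.cong) auto
    finally show "(\<Prod>j=1..Suc N. a j ^ ((snd p)(Suc N := (n - fst p) div Suc N)) j / fact (((snd p)(Suc N := (n - fst p) div Suc N)) j)) =
       T (snd p) * (c ^ ((n - fst p) div Suc N) / fact ((n - fst p) div Suc N))" by simp
  next
    fix k assume k: "k \<in> Kset (Suc N) n"
    have sum: "(\<Sum>j=1..Suc N. j * k j) = n" using k by (simp add: Kset_def)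
    hence sum': "(\<Sum>j=1..N. j * k j) + Suc N * k (Suc N) = n" by (simp add: atLeastAtMostSuc_conv)
    have e1: "n - (n - Suc N * k (Suc N)) = Suc N * k (Suc N)" using sum' by linarith
    have e2: "(Suc N * k (Suc N)) div Suc N = k (Suc N)" by (rule nonzero_mult_div_cancel_left) simp
    show "(\<lambda>p. (snd p)(Suc N := (n - fst p) div Suc N)) ((\<lambda>k. (n - Suc N * k (Suc N), k(Suc N := 0))) k) = k"
      unfolding fun_eq_iff by (simp only: prod.sel fun_upd_apply e1 e2) auto
    have "(\<Sum>j=1..N. j * (k(Suc N := 0)) j) = (\<Sum>j=1..N. j * k j)" by (intro sum.cong) auto
    then show "(\<lambda>k. (n - Suc N * k (Suc N), k(Suc N := 0))) k \<in> S"
      using sum' k unfolding S_def Kset_def by (auto simp: dvd_def)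
  qed
  finally show ?thesis ..
qed

lemma fps_prod_Efps:
  fixes a :: "nat \<Rightarrow> 'a::field_char_0"
  shows "fps_nth (\<Prod>j=1..N. Efps (a j) j) n = Ssum a N n"
proof (induction N arbitrary: n)
  case 0
  show ?case by (simp add: Ssum_def Kset_0)
next
  case (Suc N)
  have "(\<Prod>j=1..Suc N. Efps (a j) j) = (\<Prod>j=1..N. Efps (a j) j) * Efps (a (Suc N)) (Suc N)"
    by (rule prodSuc_split)
  hence "fps_nth (\<Prod>j=1..Suc N. Efps (a j) j) n = (\<Sum>i=0..n. fps_nth (\<Prod>j=1..N. Efps (a j) j) i * fps_nth (Efps (a (Suc N)) (Suc N)) (n - i))"
    by (simp only: fps_mult_nth)
  also have "\<dots> = Ssum a (Suc N) n" unfolding Ssum_Suc Suc.IH ..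
  finally show ?case .
qed



lemma Efps_sums:
  fixes c z :: "'a::{banach, real_normed_field}"
  assumes j: "j \<ge> 1"
  shows "(\<lambda>n. fps_nth (Efps c j) n * z^n) sums exp (c * z^j)"
proof -
  have e: "(\<lambda>n. (c*z^j)^n /\<^sub>R fact n) sums exp(c*z^j)" by (rule exp_converges)
  have sm: "strict_mono (\<lambda>n::nat. j*n)" using j by (intro strict_monoI) auto
  have "fps_nth (Efps c j) (j*n) * z^(j*n) = (c*z^j)^n /\<^sub>R fact n" for n
  proof -
    have "fps_nth (Efps c j) (j*n) = c^n / fact n" using j by (simp add: Efps_def)
    moreover have "z^(j*n) = (z^j)^n" by (simp add: power_mult)
    ultimately show ?thesis by (simp add: scaleR_conv_of_real power_mult_distrib divide_inverse mult_ac)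
  qed
  hence "(\<lambda>n. fps_nth (Efps c j) (j*n) * z^(j*n)) = (\<lambda>n. (c*z^j)^n /\<^sub>R fact n)" by auto
  with e have "(\<lambda>n. fps_nth (Efps c j) (j*n) * z^(j*n)) sums exp(c*z^j)" by simp
  moreover have "fps_nth (Efps c j) n * z^n = 0" if "n \<notin> range (\<lambda>n. j*n)" for n
    using that by (auto simp: Efps_def elim!: dvdE)
  ultimately show ?thesis using sums_mono_reindex[OF sm, of "\<lambda>n. fps_nth (Efps c j) n * z^n"] by auto
qed

lemma Efps_radius:
  fixes c :: "'a::{banach, real_normed_field}"
  assumes j: "j \<ge> 1"
  shows "fps_conv_radius (Efps c j) = \<infinity>"
proof -
  have "fps_conv_radius (Efps c j) \<ge> \<infinity>" unfolding fps_conv_radius_def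
    by (rule conv_radius_geI_ex') (use Efps_sums[OF j] sums_summable in blast)
  thus ?thesis by simp
qed

lemma eval_Efps:
  fixes c :: "'a::{banach, real_normed_field}"
  assumes j: "j \<ge> 1"
  shows "eval_fps (Efps c j) z = exp (c * z^j)"
  unfolding eval_fps_def using Efps_sums[OF j] by (rule sums_unique[symmetric])

lemma prod_Efps_eval:
  fixes a :: "nat \<Rightarrow> 'a::{banach, real_normed_field}"
  shows "fps_conv_radius (\<Prod>j=1..N. Efps (a j) j) = \<infinity> \<and> eval_fps (\<Prod>j=1..N. Efps (a j) j) z = (\<Prod>j=1..N. exp (a j * z^j))"
proof (induction N)
  case 0 thus ?case by simp
next
  case (Suc N)
  have r2: "fps_conv_radius (Efps (a (Suc N)) (Suc N)) = \<infinity>" by (rule Efps_radius) simp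
  have r: "fps_conv_radius ((\<Prod>j=1..N. Efps (a j) j) * Efps (a (Suc N)) (Suc N)) = \<infinity>"
    using fps_conv_radius_mult[of "\<Prod>j=1..N. Efps (a j) j" "Efps (a (Suc N)) (Suc N)"] Suc r2 by simp
  have "eval_fps ((\<Prod>j=1..N. Efps (a j) j) * Efps (a (Suc N)) (Suc N)) z
      = eval_fps (\<Prod>j=1..N. Efps (a j) j) z * eval_fps (Efps (a (Suc N)) (Suc N)) z" (is "?l = ?r")
  proof -
    have "fps_conv_radius (\<Prod>j=1..N. Efps (a j) j) = \<infinity>" using Suc.IH by blast
    thus ?thesis using r2 by (intro eval_fps_mult) simp_all
  qed
  thus ?case using r Suc by (simp add: prodSuc_split eval_Efps)
qed

lemma Ssum_sums:
  fixes a :: "nat \<Rightarrow> 'a::{banach, real_normed_field}"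
  shows "(\<lambda>n. Ssum a N n * z^n) sums exp (\<Sum>j=1..N. a j * z^j)"
proof -
  have "(\<lambda>n. fps_nth (\<Prod>j=1..N. Efps (a j) j) n * z^n) sums eval_fps (\<Prod>j=1..N. Efps (a j) j) z"
    by (rule sums_eval_fps) (use prod_Efps_eval[of a N] in simp)
  moreover have "eval_fps (\<Prod>j=1..N. Efps (a j) j) z = exp (\<Sum>j=1..N. a j * z^j)"
    using prod_Efps_eval[of a N z] by (simp add: exp_sum)
  ultimately show ?thesis unfolding fps_prod_Efps by simp
qed



lemma Ssum_nonneg:
  fixes a :: "nat \<Rightarrow> real"
  assumes "\<And>j. a j \<ge> 0"
  shows "Ssum a N n \<ge> 0"
  unfolding Ssum_def using assms by (intro sum_nonneg prod_nonneg) auto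

lemma sum_1_to_lessThan:
  assumes "f 0 = (0::'a::comm_monoid_add)"
  shows "(\<Sum>j=1..N. f j) = (\<Sum>j<Suc N. f j)"
proof -
  have "{..<Suc N} = insert 0 {1..N}" by auto
  thus ?thesis using assms by simp
qed

lemma exp_series_Ssum:
  fixes a :: "nat \<Rightarrow> complex" and z :: complex
  assumes a0: "a 0 = 0" and F: "(\<lambda>n. a n * z^n) sums F"
      and ab: "summable (\<lambda>n. norm (a n) * norm z ^ n)"
  shows "(\<lambda>n. Ssum a n n * z^n) sums exp F"
proof -
  define r where "r = norm z"
  define ap where "ap = (\<lambda>j. norm (a j))"
  have ap0: "\<And>j. ap j \<ge> 0" by (simp add: ap_def)
  have r0: "r \<ge> 0" by (simp add: r_def)
  have abr: "summable (\<lambda>n. ap n * r^n)" using ab by (simp add: ap_def r_def)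
  have C1: "summable (\<lambda>n. Ssum ap n n * r^n)"
  proof (rule summableI_nonneg_bounded)
    show "0 \<le> Ssum ap n n * r^n" for n using Ssum_nonneg[OF ap0] r0 by simp
  next
    fix M
    have "(\<Sum>n<M. Ssum ap n n * r^n) = (\<Sum>n<M. Ssum ap M n * r^n)"
    proof (intro sum.cong refl)
      fix n assume "n \<in> {..<M}"
      hence "Ssum ap M n = Ssum ap n n" by (intro Ssum_eq) auto
      thus "Ssum ap n n * r^n = Ssum ap M n * r^n" by simp
    qed
    also have "\<dots> \<le> (\<Sum>n. Ssum ap M n * r^n)"
      using Ssum_sums[of ap M r] Ssum_nonneg[OF ap0] r0
      by (intro sum_le_suminf) (auto simp: sums_iff)
    also have "\<dots> = exp (\<Sum>j=1..M. ap j * r^j)"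
      using Ssum_sums[of ap M r] by (simp add: sums_iff)
    also have "\<dots> \<le> exp (\<Sum>j. ap j * r^j)"
      using abr ap0 r0 by (simp add: sum_le_suminf)
    finally show "(\<Sum>n<M. Ssum ap n n * r^n) \<le> exp (\<Sum>j. ap j * r^j)" .
  qed
  have T: "eventually (\<lambda>N. summable (\<lambda>k. norm (Ssum a N k * z^k))) sequentially \<and>
           summable (\<lambda>n. norm (Ssum a n n * z^n)) \<and>
           ((\<lambda>N. \<Sum>k. Ssum a N k * z^k) \<longlonglongrightarrow> (\<Sum>k. Ssum a k k * z^k))"
  proof (rule tannerys_theorem[where M = "\<lambda>k. Ssum ap k k * r^k"])
    fix k
    have "eventually (\<lambda>N. Ssum a N k * z^k = Ssum a k k * z^k) sequentially"
      using eventually_ge_at_top[of k] by eventually_elim (subst Ssum_eq, auto)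
    thus "(\<lambda>N. Ssum a N k * z^k) \<longlonglongrightarrow> Ssum a k k * z^k" by (rule tendsto_eventually)
  next
    have "norm (Ssum a N k * z^k) \<le> Ssum ap k k * r^k" for N k
    proof -
      have "norm (Ssum a N k * z^k) = norm (Ssum a N k) * r^k" by (simp add: norm_mult norm_power r_def)
      also have "\<dots> \<le> Ssum ap N k * r^k"
        using norm_Ssum[of a N k] r0 by (intro mult_right_mono) (auto simp: ap_def)
      also have "\<dots> \<le> Ssum ap k k * r^k"
        using Ssum_le_diag[OF ap0] r0 by (intro mult_right_mono) auto
      finally show ?thesis .
    qed
    thus "eventually (\<lambda>(k, N). norm (Ssum a N k * z^k) \<le> Ssum ap k k * r^k) (at_top \<times>\<^sub>F sequentially)"
      by (intro always_eventually) auto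
  qed (use C1 in auto)
  have lim1: "(\<lambda>N. \<Sum>k. Ssum a N k * z^k) = (\<lambda>N. exp (\<Sum>j<Suc N. a j * z^j))"
  proof
    fix N
    have "(\<Sum>k. Ssum a N k * z^k) = exp (\<Sum>j=1..N. a j * z^j)"
      using Ssum_sums[of a N z] by (simp add: sums_iff)
    also have "\<dots> = exp (\<Sum>j<Suc N. a j * z^j)" using a0 by (subst sum_1_to_lessThan) auto
    finally show "(\<Sum>k. Ssum a N k * z^k) = exp (\<Sum>j<Suc N. a j * z^j)" .
  qed
  have "(\<lambda>N. exp (\<Sum>j<Suc N. a j * z^j)) \<longlonglongrightarrow> exp F"
    using F unfolding sums_def by (intro tendsto_exp LIMSEQ_Suc)
  hence L2: "(\<lambda>N. \<Sum>k. Ssum a N k * z^k) \<longlonglongrightarrow> exp F" unfolding lim1 .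
  have L1: "(\<lambda>N. \<Sum>k. Ssum a N k * z^k) \<longlonglongrightarrow> (\<Sum>k. Ssum a k k * z^k)"
    using T[THEN conjunct2, THEN conjunct2] .
  have "(\<Sum>k. Ssum a k k * z^k) = exp F" using L1 L2 by (rule LIMSEQ_unique)
  moreover have "summable (\<lambda>n. Ssum a n n * z^n)"
    using T[THEN conjunct2, THEN conjunct1] by (rule summable_norm_cancel)
  ultimately show ?thesis by (simp add: sums_iff)
qed



definition tt :: "complex \<Rightarrow> nat \<Rightarrow> nat \<Rightarrow> complex" where
  "tt z m n = (if 3 \<le> n then - (of_nat m * (- (z / of_nat m)) ^ n / of_nat n) else 0)"

definition hh :: "complex \<Rightarrow> nat \<Rightarrow> complex" where
  "hh z m = of_nat m * ln (1 + z / of_nat m) + z\<^sup>2 / (2 * of_nat m) - z"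

lemma hh_sums:
  assumes z: "norm z < 1" and m: "m \<ge> 1"
  shows "(\<lambda>n. tt z m n) sums hh z m"
proof -
  define w where "w = z / of_nat m"
  have w: "norm w < 1" using z m by (simp add: w_def norm_divide divide_less_eq)
  define g where "g = (\<lambda>n. of_nat m * (- ((-w)^n) / of_nat n))"
  have "g sums (of_nat m * ln (1 + w))" unfolding g_def by (rule sums_mult) (rule Ln_series'[OF w])
  moreover have "(\<lambda>n. if n \<in> {..<3} then g n else 0) sums (\<Sum>n\<in>{..<3}. g n)"
    by (rule sums_If_finite_set) simp
  ultimately have "(\<lambda>n. g n - (if n \<in> {..<3} then g n else 0)) sums (of_nat m * ln (1 + w) - (\<Sum>n\<in>{..<3}. g n))"
    by (rule sums_diff)
  moreover have "(\<Sum>n\<in>{..<3}. g n) = z - z\<^sup>2 / (2 * of_nat m)"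
    using m by (simp add: g_def w_def eval_nat_numeral power2_eq_square field_simps)
  moreover have "(\<lambda>n. g n - (if n \<in> {..<3} then g n else 0)) = tt z m"
    by (auto simp: fun_eq_iff tt_def g_def w_def)
  ultimately show ?thesis by (simp add: hh_def w_def algebra_simps)
qed

lemma hh_exp:
  assumes z: "norm z < 1" and m: "m \<ge> 1"
  shows "(1 + z / of_nat m) ^ m * exp (z\<^sup>2 / (2 * of_nat m) - z) = exp (hh z m)"
proof -
  have w: "norm (z / of_nat m) < 1" using z m by (simp add: norm_divide divide_less_eq)
  hence nz: "1 + z / of_nat m \<noteq> 0"
    by (metis add.inverse_unique norm_minus_cancel norm_one order_less_irrefl)
  have "exp (hh z m) = exp (of_nat m * ln (1 + z / of_nat m)) * exp (z\<^sup>2 / (2 * of_nat m) - z)"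
    unfolding hh_def by (simp add: exp_add[symmetric] algebra_simps)
  also have "exp (of_nat m * ln (1 + z / of_nat m)) = (1 + z / of_nat m) ^ m"
    unfolding exp_of_nat_mult using nz by simp
  finally show ?thesis by simp
qed

lemma prodinf_exp_sums:
  fixes g :: "nat \<Rightarrow> complex"
  assumes "g sums S"
  shows "prodinf (\<lambda>k. exp (g k)) = exp S"
proof -
  have lim: "(\<lambda>n. \<Prod>i\<le>n. exp (g i)) \<longlonglongrightarrow> exp S"
    using assms unfolding sums_def_le exp_sum[OF finite_atMost, symmetric]
    by (intro tendsto_exp)
  have cp: "convergent_prod (\<lambda>k. exp (g k))"
    using lim by (subst convergent_prod_iff_nz_lim) auto
  have "prodinf (\<lambda>k. exp (g k)) = lim (\<lambda>n. \<Prod>i\<le>n. exp (g i))"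
    using cp by (intro prodinf_eq_lim) auto
  also have "\<dots> = exp S" using lim by (rule limI)
  finally show ?thesis .
qed

definition zz :: "complex \<Rightarrow> nat \<Rightarrow> complex" where
  "zz z n = (if 3 \<le> n then - ((-z)^n) / of_nat n * of_real (zeta_nat (n - 1)) else 0)"

lemma tt_alt:
  assumes "m \<ge> 1" "3 \<le> n"
  shows "tt z m n = - ((-z)^n) / of_nat n * (1 / of_nat m ^ (n - 1))"
proof -
  obtain p where p: "n = Suc p" using assms by (cases n) auto
  have m0: "(of_nat m :: complex) \<noteq> 0" using assms by simp
  have "- (z / of_nat m) = (-z) / of_nat m" by simp
  hence e1: "(- (z / of_nat m)) ^ n = (-z) ^ n / of_nat m ^ n" by (simp only: power_divide)
  have e2: "(of_nat m :: complex) ^ n = of_nat m * of_nat m ^ p" by (simp add: p)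
  have "of_nat m * (- (z / of_nat m)) ^ n = of_nat m * ((-z) ^ n / (of_nat m * of_nat m ^ p))"
    unfolding e1 e2 ..
  also have "\<dots> = (-z) ^ n / of_nat m ^ p" using m0 by (simp add: field_simps)
  finally show ?thesis using assms unfolding tt_def p by simp
qed

lemma zeta_summable: "2 \<le> s \<Longrightarrow> summable (\<lambda>k. 1 / real (Suc k) ^ s)"
proof -
  assume "2 \<le> s"
  hence "summable (\<lambda>n. inverse (real n ^ s))" by (rule inverse_power_summable)
  hence "summable (\<lambda>n. inverse (real (Suc n) ^ s))" by (rule summable_Suc_iff[THEN iffD2])
  thus ?thesis by (simp add: inverse_eq_divide)
qed

lemma tt_sums_k: "(\<lambda>k. tt z (Suc k) n) sums zz z n"
proof (cases "3 \<le> n")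
  case True
  have "(\<lambda>k. 1 / real (Suc k) ^ (n - 1)) sums zeta_nat (n - 1)"
    unfolding zeta_nat_def using True by (intro summable_sums zeta_summable) auto
  hence "(\<lambda>k. of_real (1 / real (Suc k) ^ (n - 1)) :: complex) sums of_real (zeta_nat (n - 1))"
    by (rule sums_of_real)
  hence "(\<lambda>k. - ((-z)^n) / of_nat n * (of_real (1 / real (Suc k) ^ (n - 1)) :: complex)) sums (- ((-z)^n) / of_nat n * of_real (zeta_nat (n - 1)))"
    by (rule sums_mult)
  moreover have "tt z (Suc k) n = - ((-z)^n) / of_nat n * (of_real (1 / real (Suc k) ^ (n - 1)) :: complex)" for k
    using tt_alt[of "Suc k" n z] True by simp
  ultimately show ?thesis using True by (simp add: zz_def)
next
  case False thus ?thesis by (simp add: tt_def zz_def)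
qed

lemma norm_tt: "norm (tt z (Suc k) n) \<le> norm z ^ n * (1 / real (Suc k) ^ 2)"
proof (cases "3 \<le> n")
  case True
  have "norm (tt z (Suc k) n) = norm z ^ n / real n * (1 / real (Suc k) ^ (n - 1))"
    using tt_alt[of "Suc k" n z] True by (simp add: norm_mult norm_divide norm_power del: of_nat_Suc)
  also have "\<dots> \<le> norm z ^ n * (1 / real (Suc k) ^ (n - 1))"
  proof (intro mult_right_mono)
    have "norm z ^ n * 1 \<le> norm z ^ n * real n" using True by (intro mult_left_mono) auto
    thus "norm z ^ n / real n \<le> norm z ^ n" using True by (simp add: divide_le_eq)
  qed auto
  also have "\<dots> \<le> norm z ^ n * (1 / real (Suc k) ^ 2)"
  proof (intro mult_left_mono divide_left_mono)
    show "real (Suc k) ^ 2 \<le> real (Suc k) ^ (n - 1)" using True by (intro power_increasing) auto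
  qed auto
  finally show ?thesis .
next
  case False thus ?thesis by (simp add: tt_def)
qed

lemma hh_Suc_sums:
  assumes z: "norm z < 1"
  shows "(\<lambda>k. hh z (Suc k)) sums (\<Sum>n. zz z n) \<and> summable (zz z)"
proof -
  define Z2 where "Z2 = zeta_nat 2"
  have T: "eventually (\<lambda>M. summable (\<lambda>n. norm (\<Sum>k<M. tt z (Suc k) n))) sequentially \<and>
           summable (\<lambda>n. norm (zz z n)) \<and>
           ((\<lambda>M. \<Sum>n. \<Sum>k<M. tt z (Suc k) n) \<longlonglongrightarrow> (\<Sum>n. zz z n))"
  proof (rule tannerys_theorem[where M = "\<lambda>n. norm z ^ n * Z2"])
    fix n show "(\<lambda>M. \<Sum>k<M. tt z (Suc k) n) \<longlonglongrightarrow> zz z n"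
      using tt_sums_k[of z n] by (simp add: sums_def)
  next
    have "norm (\<Sum>k<M. tt z (Suc k) n) \<le> norm z ^ n * Z2" for M n
    proof -
      have "norm (\<Sum>k<M. tt z (Suc k) n) \<le> (\<Sum>k<M. norm (tt z (Suc k) n))" by (rule norm_sum)
      also have "\<dots> \<le> (\<Sum>k<M. norm z ^ n * (1 / real (Suc k) ^ 2))" by (intro sum_mono norm_tt)
      also have "\<dots> = norm z ^ n * (\<Sum>k<M. 1 / real (Suc k) ^ 2)" by (simp add: sum_distrib_left)
      also have "(\<Sum>k<M. 1 / real (Suc k) ^ 2) \<le> Z2"
        unfolding Z2_def zeta_nat_def by (intro sum_le_suminf zeta_summable) auto
      hence "norm z ^ n * (\<Sum>k<M. 1 / real (Suc k) ^ 2) \<le> norm z ^ n * Z2" by (intro mult_left_mono) auto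
      finally show ?thesis .
    qed
    thus "eventually (\<lambda>(n, M). norm (\<Sum>k<M. tt z (Suc k) n) \<le> norm z ^ n * Z2) (at_top \<times>\<^sub>F sequentially)"
      by (intro always_eventually) auto
  next
    show "summable (\<lambda>n. norm z ^ n * Z2)" using z by (intro summable_mult2 summable_geometric) simp
  qed auto
  have "(\<Sum>n. \<Sum>k<M. tt z (Suc k) n) = (\<Sum>k<M. hh z (Suc k))" for M
  proof -
    have "(\<Sum>n. \<Sum>k<M. tt z (Suc k) n) = (\<Sum>k<M. \<Sum>n. tt z (Suc k) n)"
      using hh_sums[OF z] by (intro suminf_sum) (auto simp: sums_iff)
    also have "\<dots> = (\<Sum>k<M. hh z (Suc k))"
      using hh_sums[OF z] by (intro sum.cong refl) (auto simp: sums_iff)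
    finally show ?thesis .
  qed
  with T show ?thesis unfolding sums_def using summable_norm_cancel by auto
qed

definition aa :: "nat \<Rightarrow> complex" where
  "aa n = complex_of_real ((-1)^n * cB n / real n)"

definition FF :: "complex \<Rightarrow> complex" where
  "FF z = (\<Sum>n<3. aa n * z^n) - (\<Sum>n. zz z n)"

lemma aa_0: "aa 0 = 0" by (simp add: aa_def)

lemma aa_sums:
  assumes z: "norm z < 1"
  shows "(\<lambda>n. aa n * z^n) sums FF z"
proof -
  have s1: "(\<lambda>n. if n \<in> {..<3} then aa n * z^n else 0) sums (\<Sum>n\<in>{..<3}. aa n * z^n)"
    by (rule sums_If_finite_set) simp
  have s2: "(\<lambda>n. - zz z n) sums (- (\<Sum>n. zz z n))"
    using hh_Suc_sums[OF z] by (intro sums_minus summable_sums) auto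
  have "(\<lambda>n. aa n * z^n) = (\<lambda>n. (if n \<in> {..<3} then aa n * z^n else 0) + - zz z n)"
  proof
    fix n show "aa n * z^n = (if n \<in> {..<3} then aa n * z^n else 0) + - zz z n"
    proof (cases "n < 3")
      case True thus ?thesis by (simp add: zz_def)
    next
      case False
      hence "cB n = zeta_nat (n - 1)" by (simp add: cB_def)
      thus ?thesis using False by (simp add: zz_def aa_def power_minus[of z])
    qed
  qed
  thus ?thesis using sums_add[OF s1 s2] by (simp add: FF_def)
qed

  
lemma barnes_exp:
  assumes z: "norm z < 1"
  shows "barnesG (1 + z) = exp (- FF z)"
proof -
  have "(\<lambda>k. (1 + z / of_nat (Suc k)) ^ (Suc k) * exp (z\<^sup>2 / (2 * of_nat (Suc k)) - z))
      = (\<lambda>k. exp (hh z (Suc k)))"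
    using hh_exp[OF z] by (intro ext) (metis le_add1 plus_1_eq_Suc)
  hence P: "(\<Prod>k. (1 + z / of_nat (Suc k)) ^ (Suc k) * exp (z\<^sup>2 / (2 * of_nat (Suc k)) - z))
      = exp (\<Sum>n. zz z n)"
    using prodinf_exp_sums[OF hh_Suc_sums[OF z, THEN conjunct1]] by simp
  have "barnesG (1 + z) = exp (z / 2 * of_real (ln (2 * pi))) * exp (- ((1 + euler_mascheroni) * z\<^sup>2 + z) / 2)
      * exp (\<Sum>n. zz z n)"
    unfolding barnesG_def Let_def P[symmetric] by simp
  also have "\<dots> = exp (z / 2 * of_real (ln (2 * pi)) + (- ((1 + euler_mascheroni) * z\<^sup>2 + z) / 2) + (\<Sum>n. zz z n))"
    by (simp add: exp_add)
  also have "z / 2 * of_real (ln (2 * pi)) + (- ((1 + euler_mascheroni) * z\<^sup>2 + z) / 2) + (\<Sum>n. zz z n) = - FF z"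
    unfolding FF_def by (simp add: eval_nat_numeral aa_def cB_def of_real_euler_mascheroni field_simps)
  finally show ?thesis .
qed



definition AF :: "complex fps" where "AF = Abs_fps aa"

lemma AF_radius: "fps_conv_radius AF \<ge> 1"
  unfolding fps_conv_radius_def AF_def fps_nth_Abs_fps
proof (rule conv_radius_geI_ex')
  fix r :: real assume "0 < r" "ereal r < 1"
  hence "norm (of_real r :: complex) < 1" by simp
  thus "summable (\<lambda>n. aa n * of_real r ^ n)" using aa_sums sums_summable by blast
qed

lemma eval_AF: "norm z < 1 \<Longrightarrow> eval_fps AF z = FF z"
  unfolding eval_fps_def AF_def fps_nth_Abs_fps using aa_sums by (simp add: sums_iff)

lemma aa_abs:
  fixes z :: complex
  assumes "norm z < 1" shows "summable (\<lambda>n. norm (aa n) * norm z ^ n)"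
proof -
  have "ereal (norm z) < 1" using assms by simp
  hence "norm z < fps_conv_radius AF" using AF_radius by (rule order.strict_trans2)
  from norm_summable_fps[OF this] show ?thesis by (simp add: AF_def norm_mult norm_power)
qed

lemma main_sums:
  assumes "norm z < 1"
  shows "(\<lambda>n. Ssum aa n n * z^n) sums (1 / barnesG (1 + z))"
  using exp_series_Ssum[OF aa_0 aa_sums[OF assms] aa_abs[OF assms]] barnes_exp[OF assms]
  by (simp add: exp_minus inverse_eq_divide)

lemma bell_Ssum:
  fixes x :: "nat \<Rightarrow> 'a::field_char_0"
  shows "bell_Y r x / fact r = Ssum (\<lambda>j. x j / fact j) r r"
proof -
  have "bell_Y r x / fact r = (\<Sum>k\<in>Kset r r. fact r / (\<Prod>j=1..r. fact (k j)) * (\<Prod>j=1..r. (x j / fact j) ^ (k j)) / fact r)"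
    unfolding bell_Y_def Kset_def by (simp add: sum_divide_distrib)
  also have "\<dots> = Ssum (\<lambda>j. x j / fact j) r r"
    unfolding Ssum_def by (intro sum.cong refl) (simp add: prod_dividef)
  finally show ?thesis .
qed

definition XC :: "nat \<Rightarrow> complex" where
  "XC = (\<lambda>j. of_real ((-1) ^ j * fact (j - 1) * cB j))"

lemma XC_aa: "Ssum (\<lambda>j. XC j / fact j) n n = Ssum aa n n"
proof (rule Ssum_cong)
  fix j :: nat assume "j \<in> {1..n}"
  hence j: "j > 0" by auto
  have "(fact j :: complex) = of_nat j * fact (j - 1)" using j by (rule fact_reduce)
  thus "XC j / fact j = aa j" using j unfolding XC_def aa_def by (simp add: field_simps)
qed

lemma bell_XC: "bell_Y n XC = fact n * Ssum aa n n"
  using bell_Ssum[of n XC] XC_aa[of n] by (simp add: field_simps)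



lemma part1:
  assumes "norm x < 1"
  shows "(\<lambda>n. bell_Y n (\<lambda>j. of_real ((-1) ^ j * fact (j - 1) * cB j)) * x ^ n / fact n)
             sums (1 / barnesG (1 + x))"
proof -
  have "bell_Y n (\<lambda>j. of_real ((-1) ^ j * fact (j - 1) * cB j)) * x ^ n / fact n = Ssum aa n n * x^n" for n
    using bell_XC[of n] unfolding XC_def by simp
  thus ?thesis using main_sums[OF assms] by simp
qed

definition BF :: "complex fps" where "BF = Abs_fps (\<lambda>n. Ssum aa n n)"

lemma BF_radius: "fps_conv_radius BF \<ge> 1"
  unfolding fps_conv_radius_def BF_def fps_nth_Abs_fps
proof (rule conv_radius_geI_ex')
  fix r :: real assume "0 < r" "ereal r < 1"
  hence "norm (of_real r :: complex) < 1" by simp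
  thus "summable (\<lambda>n. Ssum aa n n * of_real r ^ n)" using main_sums sums_summable by blast
qed

lemma BF_expansion: "(\<lambda>x. 1 / barnesG (1 + x)) has_fps_expansion BF"
  unfolding has_fps_expansion_def
proof
  have "(0::ereal) < 1" by simp
  thus "0 < fps_conv_radius BF" using BF_radius by (rule order.strict_trans2)
  have "eventually (\<lambda>z::complex. z \<in> ball 0 1) (nhds 0)"
    by (intro eventually_nhds_in_open) auto
  thus "eventually (\<lambda>z. eval_fps BF z = 1 / barnesG (1 + z)) (nhds 0)"
  proof eventually_elim
    case (elim z)
    hence "norm z < 1" by simp
    thus ?case unfolding eval_fps_def BF_def fps_nth_Abs_fps using main_sums by (simp add: sums_iff)
  qed
qed

lemma bell_of_real:
  "bell_Y r (\<lambda>j. of_real (x j)) = (of_real (bell_Y r x) :: complex)"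
  unfolding bell_Y_def by (simp add: of_real_sum of_real_prod)

lemma bell_neg:
  fixes y :: "nat \<Rightarrow> real"
  shows "bell_Y r (\<lambda>j. (-1)^j * y j) = (-1)^r * bell_Y r y"
  unfolding bell_Y_def sum_distrib_left
proof (intro sum.cong refl)
  fix k assume k: "k \<in> {k :: nat \<Rightarrow> nat. (\<forall>j. j \<notin> {1..r} \<longrightarrow> k j = 0) \<and> (\<Sum>j=1..r. j * k j) = r}"
  have "(\<Prod>j=1..r. ((-1)^j * y j / fact j) ^ k j) = (\<Prod>j=1..r. (-1::real)^(j * k j) * (y j / fact j) ^ k j)"
    by (intro prod.cong refl) (simp only: times_divide_eq_right[symmetric] power_mult_distrib power_mult)
  also have "\<dots> = (\<Prod>j=1..r. (-1::real)^(j * k j)) * (\<Prod>j=1..r. (y j / fact j) ^ k j)"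
    by (rule prod.distrib)
  also have "(\<Prod>j=1..r. (-1::real)^(j * k j)) = (-1)^r"
    using k by (simp add: power_sum[symmetric])
  finally show "fact r / (\<Prod>j=1..r. fact (k j)) * (\<Prod>j=1..r. ((-1)^j * y j / fact j) ^ k j)
      = (-1)^r * (fact r / (\<Prod>j=1..r. fact (k j)) * (\<Prod>j=1..r. (y j / fact j) ^ k j))" by simp
qed

lemma bell_pos:
  fixes y :: "nat \<Rightarrow> real"
  assumes "\<And>j. j \<ge> 1 \<Longrightarrow> y j > 0"
  shows "bell_Y r y > 0"
proof -
  have eq: "{k :: nat \<Rightarrow> nat. (\<forall>j. j \<notin> {1..r} \<longrightarrow> k j = 0) \<and> (\<Sum>j=1..r. j * k j) = r} = Kset r r"
    by (simp add: Kset_def)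
  define k0 where "k0 = (\<lambda>j. if j = r \<and> 0 < r then 1 else (0::nat))"
  have "(\<Sum>j=1..r. j * k0 j) = r"
  proof (cases "r = 0")
    case False
    have "(\<Sum>j=1..r. j * k0 j) = (\<Sum>j=1..r. if j = r then r else 0)"
      using False by (intro sum.cong) (auto simp: k0_def)
    also have "\<dots> = r" using False by simp
    finally show ?thesis .
  qed simp
  hence k0: "k0 \<in> Kset r r" by (auto simp: Kset_def k0_def)
  have pos: "0 < fact r / (\<Prod>j=1..r. fact (k j)) * (\<Prod>j=1..r. (y j / fact j) ^ k j)" for k :: "nat \<Rightarrow> nat"
    using assms by (intro mult_pos_pos divide_pos_pos prod_pos zero_less_power) auto
  show ?thesis unfolding bell_Y_def eq
    by (rule sum_pos2[OF finite_Kset k0]) (use pos in \<open>auto intro: less_imp_le\<close>)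
qed

lemma cB_pos: "j \<ge> 1 \<Longrightarrow> cB j > 0"
proof -
  assume j: "j \<ge> 1"
  consider "j = 1" | "j = 2" | "j \<ge> 3" using j by linarith
  thus ?thesis
  proof cases
    case 1
    have "exp 1 < 2 * pi" using pi_gt3 exp_le by simp
    hence "ln (exp 1) < ln (2 * pi)" by (intro ln_less_cancel_iff[THEN iffD2]) auto
    hence "1 < ln (2 * pi)" by simp
    thus ?thesis using 1 by (simp add: cB_def)
  next
    case 2 thus ?thesis using euler_mascheroni_pos by (simp add: cB_def)
  next
    case 3
    have "0 < zeta_nat (j - 1)" unfolding zeta_nat_def
      using 3 by (intro suminf_pos zeta_summable) auto
    thus ?thesis using 3 by (simp add: cB_def)
  qed
qed

lemma part2:
  "(deriv ^^ m) (\<lambda>x. 1 / barnesG (1 + x)) 0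
              = of_real ((-1) ^ m * bell_Y m (\<lambda>j. fact (j - 1) * cB j))
            \<and> 0 < (-1) ^ m * ((-1) ^ m * bell_Y m (\<lambda>j. fact (j - 1) * cB j))"
proof
  have "Ssum aa m m = (deriv ^^ m) (\<lambda>x. 1 / barnesG (1 + x)) 0 / fact m"
    using fps_nth_fps_expansion[OF BF_expansion, of m] by (simp add: BF_def)
  hence "(deriv ^^ m) (\<lambda>x. 1 / barnesG (1 + x)) 0 = bell_Y m XC"
    by (simp add: bell_XC field_simps)
  also have "\<dots> = of_real (bell_Y m (\<lambda>j. (-1) ^ j * fact (j - 1) * cB j))"
    unfolding XC_def by (rule bell_of_real)
  also have "(\<lambda>j. (-1) ^ j * fact (j - 1) * cB j) = (\<lambda>j. (-1) ^ j * (fact (j - 1) * cB j :: real))"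
    by (simp add: mult.assoc)
  finally show "(deriv ^^ m) (\<lambda>x. 1 / barnesG (1 + x)) 0
              = of_real ((-1) ^ m * bell_Y m (\<lambda>j. fact (j - 1) * cB j))"
    by (simp add: bell_neg)
  have "0 < bell_Y m (\<lambda>j. fact (j - 1) * cB j)"
    by (rule bell_pos) (use cB_pos in simp)
  thus "0 < (-1) ^ m * ((-1) ^ m * bell_Y m (\<lambda>j. fact (j - 1) * cB j :: real))"
    by (simp add: mult.assoc[symmetric] power_mult_distrib[symmetric])
qed

lemma part3: "deriv barnesG 1 = of_real ((ln (2 * pi) - 1) / 2)"
proof -
  define g where "g = (\<lambda>w. exp (- eval_fps AF (w - 1)))"
  have "ereal (norm (0::complex)) < 1" by simp
  hence r: "norm (0::complex) < fps_conv_radius AF" using AF_radius by (rule order.strict_trans2)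
  have d1: "(eval_fps AF has_field_derivative eval_fps (fps_deriv AF) 0) (at ((1::complex) - 1))"
    using has_field_derivative_eval_fps[OF r] by simp
  have d2: "((\<lambda>w::complex. w - 1) has_field_derivative 1) (at 1)"
    by (auto intro!: derivative_eq_intros)
  have d3: "((\<lambda>w. eval_fps AF (w - 1)) has_field_derivative eval_fps (fps_deriv AF) 0 * 1) (at 1)"
    by (rule DERIV_chain2[OF d1 d2])
  have d4: "(g has_field_derivative exp (- eval_fps AF (1 - 1)) * (- (eval_fps (fps_deriv AF) 0 * 1))) (at 1)"
    unfolding g_def by (rule DERIV_chain2[OF DERIV_exp]) (rule DERIV_minus[OF d3])
  have val: "exp (- eval_fps AF (1 - 1)) * (- (eval_fps (fps_deriv AF) 0 * 1)) = of_real ((ln (2 * pi) - 1) / 2)"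
    by (simp add: eval_fps_at_0 AF_def aa_def cB_def field_simps)
  have "(barnesG has_field_derivative of_real ((ln (2 * pi) - 1) / 2)) (at 1)"
  proof (rule has_field_derivative_transform_within_open[OF d4[unfolded val], of "ball 1 1"])
    fix w :: complex assume "w \<in> ball 1 1"
    hence w: "norm (w - 1) < 1" by (simp add: dist_norm norm_minus_commute)
    have "barnesG w = barnesG (1 + (w - 1))" by simp
    also have "\<dots> = g w" using barnes_exp[OF w] eval_AF[OF w] by (simp add: g_def)
    finally show "g w = barnesG w" ..
  qed auto
  thus ?thesis by (rule DERIV_imp_deriv)
qed

theorem mainTheorem16:
  shows "(\<forall>x::complex. norm x < 1 \<longrightarrow>
           (\<lambda>n. bell_Y n (\<lambda>j. of_real ((-1) ^ j * fact (j - 1) * cB j)) * x ^ n / fact n)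
             sums (1 / barnesG (1 + x)))
       \<and> (\<forall>m::nat. (deriv ^^ m) (\<lambda>x. 1 / barnesG (1 + x)) 0
              = of_real ((-1) ^ m * bell_Y m (\<lambda>j. fact (j - 1) * cB j))
            \<and> 0 < (-1) ^ m * ((-1) ^ m * bell_Y m (\<lambda>j. fact (j - 1) * cB j)))
       \<and> deriv barnesG 1 = of_real ((ln (2 * pi) - 1) / 2)"
  using part1 part2 part3 by blast

end
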